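(* Let $(M,\cdot)$ be a moving semigroup. Then the family of DIP subsets of $M$ is partition regular: if $X\subseteq M$ is DIP and $Y\subseteq X$, then either $Y$ or $X\setminus Y$ is DIP.
   Context: $\beta M$ is the Stone–Čech compactification of the discrete semigroup $M$ with the usual extended operation; $(M,\cdot)$ is moving if $\beta M\setminus M$ is a subsemigroup of $\beta M$. For a sequence $(x_n)$ in $M$, $\mathrm{FP}(x_n)=\{x_{i_1}\cdots x_{i_k}: k\ge1,\ i_1<\cdots<i_k\}$. A set $A\subseteq M$ is DIP if there is an injective sequence $(x_n)$ in $M$ with $\mathrm{FP}(x_n)\subseteq A$. *)

theory Defs
  imports Main
begin

text \<open>Points of the Stone-Cech compactification beta M of the discrete semigroup M
  (here M = UNIV of a type of class semigroup_mult) are the ultrafilters on M,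
  represented as families of subsets of M. M embeds as the principal ultrafilters.\<close>

definition is_ultrafilter :: "'a set set \<Rightarrow> bool" where
  "is_ultrafilter U \<longleftrightarrow>
     {} \<notin> U \<and> UNIV \<in> U \<and>
     (\<forall>A B. A \<in> U \<and> A \<subseteq> B \<longrightarrow> B \<in> U) \<and>
     (\<forall>A B. A \<in> U \<and> B \<in> U \<longrightarrow> A \<inter> B \<in> U) \<and>
     (\<forall>A. A \<in> U \<or> - A \<in> U)"

definition principal_uf :: "'a \<Rightarrow> 'a set set" where
  "principal_uf x = {A. x \<in> A}"

definition is_principal :: "'a set set \<Rightarrow> bool" where
  "is_principal U \<longleftrightarrow> (\<exists>x. U = principal_uf x)"

definition uf_mult :: "'a::semigroup_mult set set \<Rightarrow> 'a set set \<Rightarrow> 'a set set" where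
  "uf_mult p q = {A. {x. {y. x * y \<in> A} \<in> q} \<in> p}"

definition moving :: "'a::semigroup_mult itself \<Rightarrow> bool" where
  "moving _ \<longleftrightarrow>
     (\<forall>p q :: 'a set set. is_ultrafilter p \<and> \<not> is_principal p \<and>
        is_ultrafilter q \<and> \<not> is_principal q \<longrightarrow> \<not> is_principal (uf_mult p q))"

fun ordprod :: "(nat \<Rightarrow> 'a::semigroup_mult) \<Rightarrow> nat list \<Rightarrow> 'a" where
  "ordprod x [] = undefined"
| "ordprod x [i] = x i"
| "ordprod x (i # j # is) = x i * ordprod x (j # is)"

definition FP :: "(nat \<Rightarrow> 'a::semigroup_mult) \<Rightarrow> 'a set" where
  "FP x = {ordprod x is | is. is \<noteq> [] \<and> sorted_wrt (<) is}"

definition DIP :: "'a::semigroup_mult set \<Rightarrow> bool" where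
  "DIP A \<longleftrightarrow> (\<exists>x :: nat \<Rightarrow> 'a. inj x \<and> FP x \<subseteq> A)"

end

theory Submission
  imports Defs
begin


definition pfilter :: "'a set set \<Rightarrow> bool" where
  "pfilter F \<longleftrightarrow> {} \<notin> F \<and> UNIV \<in> F \<and> (\<forall>A B. A \<in> F \<and> A \<subseteq> B \<longrightarrow> B \<in> F) \<and>
     (\<forall>A B. A \<in> F \<and> B \<in> F \<longrightarrow> A \<inter> B \<in> F)"

lemma pfD:
  assumes "pfilter U"
  shows "{} \<notin> U" "UNIV \<in> U" "A \<in> U \<Longrightarrow> A \<subseteq> B \<Longrightarrow> B \<in> U"
    "A \<in> U \<Longrightarrow> B \<in> U \<Longrightarrow> A \<inter> B \<in> U"
  using assms unfolding pfilter_def by blast+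

lemma ufD:
  assumes "is_ultrafilter U"
  shows "{} \<notin> U" "UNIV \<in> U" "A \<in> U \<Longrightarrow> A \<subseteq> B \<Longrightarrow> B \<in> U"
    "A \<in> U \<Longrightarrow> B \<in> U \<Longrightarrow> A \<inter> B \<in> U" "A \<in> U \<or> - A \<in> U"
  using assms unfolding is_ultrafilter_def by blast+

lemma uf_compl: "is_ultrafilter U \<Longrightarrow> (- A \<in> U) = (A \<notin> U)"
  by (metis Compl_disjoint ufD(1,4,5) Int_commute)

lemma uf_Int: "is_ultrafilter U \<Longrightarrow> (A \<inter> B \<in> U) = (A \<in> U \<and> B \<in> U)"
  by (meson Int_lower1 Int_lower2 ufD(3,4))

lemma uf_eq: "is_ultrafilter p \<Longrightarrow> is_ultrafilter q \<Longrightarrow> p \<subseteq> q \<Longrightarrow> p = q"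
  by (metis subsetD subsetI subset_antisym uf_compl)

lemma uf_exists:
  assumes F: "pfilter F"
  shows "\<exists>U. is_ultrafilter U \<and> F \<subseteq> U"
proof -
  let ?Fam = "{G. F \<subseteq> G \<and> pfilter G}"
  have "\<exists>M\<in>?Fam. \<forall>X\<in>?Fam. M \<subseteq> X \<longrightarrow> X = M"
  proof (rule subset_Zorn)
    fix C assume ch: "subset.chain ?Fam C"
    show "\<exists>U\<in>?Fam. \<forall>X\<in>C. X \<subseteq> U"
    proof (cases "C = {}")
      case True then show ?thesis using F by blast
    next
      case False
      have sub: "C \<subseteq> ?Fam" and tot: "\<forall>X\<in>C. \<forall>Y\<in>C. X \<subseteq> Y \<or> Y \<subseteq> X"
        using ch by (auto simp: subset_chain_def)
      have "pfilter (\<Union>C)"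
        unfolding pfilter_def
      proof (intro conjI allI impI)
        show "{} \<notin> \<Union>C" using sub by (auto simp: pfilter_def)
        show "UNIV \<in> \<Union>C" using sub False by (auto simp: pfilter_def)
        fix A B
        show "A \<in> \<Union>C \<and> A \<subseteq> B \<Longrightarrow> B \<in> \<Union>C" using sub by (auto simp: pfilter_def)
        assume "A \<in> \<Union>C \<and> B \<in> \<Union>C"
        then obtain G1 G2 where "G1 \<in> C" "G2 \<in> C" "A \<in> G1" "B \<in> G2" by auto
        moreover have "G1 \<subseteq> G2 \<or> G2 \<subseteq> G1" using tot calculation by blast
        moreover have "pfilter G1" "pfilter G2" using sub calculation by auto
        ultimately have "A \<inter> B \<in> G1 \<or> A \<inter> B \<in> G2"
          by (metis (no_types, lifting) pfilter_def subsetD \<open>A \<in> G1\<close> \<open>B \<in> G2\<close>)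
        then show "A \<inter> B \<in> \<Union>C" using \<open>G1 \<in> C\<close> \<open>G2 \<in> C\<close> by blast
      qed
      moreover have "F \<subseteq> \<Union>C" using False sub by auto
      ultimately show ?thesis by blast
    qed
  qed
  then obtain M where Mf: "M \<in> ?Fam" and mx: "\<forall>X\<in>?Fam. M \<subseteq> X \<longrightarrow> X = M"
    by (rule bexE)
  have M: "F \<subseteq> M" "pfilter M" using Mf by auto
  have max: "\<And>X. F \<subseteq> X \<Longrightarrow> pfilter X \<Longrightarrow> M \<subseteq> X \<Longrightarrow> X = M"
    using mx by simp
  have "is_ultrafilter M"
    unfolding is_ultrafilter_def
  proof (intro conjI allI impI)
    show "{} \<notin> M" "UNIV \<in> M" using M by (auto simp: pfilter_def)
    show "\<And>A B. A \<in> M \<and> A \<subseteq> B \<Longrightarrow> B \<in> M" "\<And>A B. A \<in> M \<and> B \<in> M \<Longrightarrow> A \<inter> B \<in> M"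
      using M by (auto simp: pfilter_def)
    fix A
    show "A \<in> M \<or> - A \<in> M"
    proof (rule ccontr)
      assume n: "\<not> (A \<in> M \<or> - A \<in> M)"
      let ?M' = "{C. \<exists>D\<in>M. D \<inter> A \<subseteq> C}"
      have "pfilter ?M'"
        unfolding pfilter_def
      proof (intro conjI allI impI)
        show "{} \<notin> ?M'"
        proof
          assume "{} \<in> ?M'"
          then obtain D where "D \<in> M" "D \<inter> A \<subseteq> {}" by auto
          then have "D \<subseteq> -A" by auto
          with M \<open>D \<in> M\<close> n show False by (auto simp: pfilter_def)
        qed
        show "UNIV \<in> ?M'" using M by (auto simp: pfilter_def)
        show "\<And>A' B. A' \<in> ?M' \<and> A' \<subseteq> B \<Longrightarrow> B \<in> ?M'" by blast
        fix A' B assume "A' \<in> ?M' \<and> B \<in> ?M'"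
        then obtain D1 D2 where "D1 \<in> M" "D2 \<in> M" "D1 \<inter> A \<subseteq> A'" "D2 \<inter> A \<subseteq> B" by auto
        moreover have "D1 \<inter> D2 \<in> M" using pfD(4)[OF M(2)] calculation by simp
        moreover have "(D1 \<inter> D2) \<inter> A \<subseteq> A' \<inter> B" using calculation by blast
        ultimately show "A' \<inter> B \<in> ?M'" by (intro CollectI bexI)
      qed
      moreover have "M \<subseteq> ?M'" by blast
      moreover have "A \<in> ?M'" using M by (auto simp: pfilter_def)
      ultimately show False using max[of ?M'] M n by blast
    qed
  qed
  with M show ?thesis by blast
qed



definition closedK :: "'a set set set \<Rightarrow> bool" where
  "closedK K \<longleftrightarrow> (\<forall>p\<in>K. is_ultrafilter p) \<and>
     (\<forall>p. is_ultrafilter p \<and> (\<forall>A\<in>p. \<exists>q\<in>K. A \<in> q) \<longrightarrow> p \<in> K)"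

definition sgK :: "'a::semigroup_mult set set set \<Rightarrow> bool" where
  "sgK K \<longleftrightarrow> (\<forall>p\<in>K. \<forall>q\<in>K. uf_mult p q \<in> K)"

lemma closedKI:
  assumes "\<And>p. p \<in> K \<Longrightarrow> is_ultrafilter p"
    and "\<And>p. is_ultrafilter p \<Longrightarrow> (\<And>A. A \<in> p \<Longrightarrow> \<exists>q\<in>K. A \<in> q) \<Longrightarrow> p \<in> K"
  shows "closedK K"
  using assms unfolding closedK_def by blast

lemma closedK_uf: "closedK K \<Longrightarrow> p \<in> K \<Longrightarrow> is_ultrafilter p"
  unfolding closedK_def by blast

lemma closedK_cl: "closedK K \<Longrightarrow> is_ultrafilter p \<Longrightarrow> (\<And>A. A \<in> p \<Longrightarrow> \<exists>q\<in>K. A \<in> q) \<Longrightarrow> p \<in> K"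
  unfolding closedK_def by blast

lemma closedK_basic: "closedK {p. is_ultrafilter p \<and> (\<forall>C\<in>\<C>. C \<in> p)}"
proof (rule closedKI)
  fix p assume p: "is_ultrafilter p" and h: "\<And>A. A \<in> p \<Longrightarrow> \<exists>q\<in>{p. is_ultrafilter p \<and> (\<forall>C\<in>\<C>. C \<in> p)}. A \<in> q"
  have "C \<in> p" if "C \<in> \<C>" for C
  proof (rule ccontr)
    assume "C \<notin> p"
    then have "- C \<in> p" using uf_compl[OF p] by simp
    then obtain q where "is_ultrafilter q" "\<forall>C\<in>\<C>. C \<in> q" "- C \<in> q" using h by blast
    then show False using uf_compl that by blast
  qed
  then show "p \<in> {p. is_ultrafilter p \<and> (\<forall>C\<in>\<C>. C \<in> p)}" using p by blast
qed auto

lemma closedK_Inter: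
  assumes "\<K> \<noteq> {}" "\<And>K. K \<in> \<K> \<Longrightarrow> closedK K"
  shows "closedK (\<Inter>\<K>)"
proof (rule closedKI)
  fix p assume "p \<in> \<Inter>\<K>"
  then show "is_ultrafilter p" using assms closedK_uf by blast
next
  fix p assume p: "is_ultrafilter p" and h: "\<And>A. A \<in> p \<Longrightarrow> \<exists>q\<in>\<Inter>\<K>. A \<in> q"
  have "p \<in> K" if "K \<in> \<K>" for K
    using closedK_cl[OF assms(2)[OF that] p] h that by blast
  then show "p \<in> \<Inter>\<K>" by blast
qed

lemma closedK_Int:
  assumes "closedK K1" "closedK K2" shows "closedK (K1 \<inter> K2)"
  using closedK_Inter[of "{K1, K2}"] assms by auto

lemma compactK:
  assumes ne: "\<K> \<noteq> {}" and cl: "\<And>K. K \<in> \<K> \<Longrightarrow> closedK K" and nek: "\<And>K. K \<in> \<K> \<Longrightarrow> K \<noteq> {}"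
    and dir: "\<And>K1 K2. K1 \<in> \<K> \<Longrightarrow> K2 \<in> \<K> \<Longrightarrow> \<exists>K3\<in>\<K>. K3 \<subseteq> K1 \<inter> K2"
  shows "\<exists>p. \<forall>K\<in>\<K>. p \<in> K"
proof -
  let ?F = "{A. \<exists>K\<in>\<K>. \<forall>q\<in>K. A \<in> q}"
  have "pfilter ?F" unfolding pfilter_def
  proof (intro conjI allI impI)
    show "{} \<notin> ?F"
    proof
      assume "{} \<in> ?F"
      then obtain K where K: "K \<in> \<K>" "\<forall>q\<in>K. {} \<in> q" by blast
      then obtain q where "q \<in> K" using nek by blast
      then show False using K cl closedK_uf ufD(1) by blast
    qed
    obtain K where "K \<in> \<K>" using ne by blast
    then show "UNIV \<in> ?F" using cl closedK_uf ufD(2) by blast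
    fix A B
    show "A \<in> ?F \<and> A \<subseteq> B \<Longrightarrow> B \<in> ?F"
    proof -
      assume "A \<in> ?F \<and> A \<subseteq> B"
      then obtain K where K: "K \<in> \<K>" "\<forall>q\<in>K. A \<in> q" "A \<subseteq> B" by blast
      have "\<forall>q\<in>K. B \<in> q"
      proof
        fix q assume "q \<in> K"
        then have "is_ultrafilter q" using closedK_uf[OF cl[OF K(1)]] by blast
        then show "B \<in> q" using ufD(3) K \<open>q \<in> K\<close> by blast
      qed
      then show "B \<in> ?F" using K by blast
    qed
    assume AB: "A \<in> ?F \<and> B \<in> ?F"
    have "A \<in> ?F" using AB by (rule conjunct1)
    then have "\<exists>K1\<in>\<K>. \<forall>q\<in>K1. A \<in> q" by (simp only: mem_Collect_eq)
    then obtain K1 where K1: "K1 \<in> \<K>" "\<forall>q\<in>K1. A \<in> q" by (rule bexE)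
    have "B \<in> ?F" using AB by (rule conjunct2)
    then have "\<exists>K2\<in>\<K>. \<forall>q\<in>K2. B \<in> q" by (simp only: mem_Collect_eq)
    then obtain K2 where K2: "K2 \<in> \<K>" "\<forall>q\<in>K2. B \<in> q" by (rule bexE)
    note K = K1 K2
    obtain K3 where K3: "K3 \<in> \<K>" "K3 \<subseteq> K1 \<inter> K2" using dir[OF K1(1) K2(1)] by (rule bexE)
    have "\<forall>q\<in>K3. A \<inter> B \<in> q"
    proof
      fix q assume "q \<in> K3"
      then have "q \<in> K1" "q \<in> K2" using K3 by auto
      then have "A \<in> q" "B \<in> q" using K by auto
      moreover have "is_ultrafilter q" using \<open>q \<in> K1\<close> closedK_uf[OF cl[OF K(1)]] by blast
      ultimately show "A \<inter> B \<in> q" using ufD(4) by blast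
    qed
    then show "A \<inter> B \<in> ?F" using K3 by blast
  qed
  then obtain p where p: "is_ultrafilter p" "?F \<subseteq> p" using uf_exists by blast
  have "p \<in> K" if K: "K \<in> \<K>" for K
  proof (rule closedK_cl[OF cl[OF K] p(1)])
    fix A assume A: "A \<in> p"
    show "\<exists>q\<in>K. A \<in> q"
    proof (rule ccontr)
      assume "\<not> ?thesis"
      then have "\<forall>q\<in>K. - A \<in> q" using uf_compl cl[OF K] closedK_uf by blast
      then have "- A \<in> p" using p K by blast
      then show False using A uf_compl[OF p(1)] by blast
    qed
  qed
  then show ?thesis by blast
qed

lemma uf_mult_mem: "A \<in> uf_mult p q \<longleftrightarrow> {x. {y. x * y \<in> A} \<in> q} \<in> p"
  unfolding uf_mult_def by simp

lemma uf_mult_assoc: "uf_mult (uf_mult p q) r = uf_mult p (uf_mult q r)"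
  unfolding uf_mult_def by (simp add: mult.assoc)

lemma uf_mult_uf:
  assumes p: "is_ultrafilter p" and q: "is_ultrafilter q"
  shows "is_ultrafilter (uf_mult p q)"
  unfolding is_ultrafilter_def uf_mult_mem
proof (intro conjI allI impI)
  show "{x. {y. x * y \<in> {}} \<in> q} \<notin> p" using ufD(1)[OF p] ufD(1)[OF q] by simp
  show "{x. {y. x * y \<in> UNIV} \<in> q} \<in> p" using ufD(2)[OF p] ufD(2)[OF q] by simp
  fix A B
  show "{x. {y. x * y \<in> A} \<in> q} \<in> p \<and> A \<subseteq> B \<Longrightarrow> {x. {y. x * y \<in> B} \<in> q} \<in> p"
  proof -
    assume h: "{x. {y. x * y \<in> A} \<in> q} \<in> p \<and> A \<subseteq> B"
    have "{x. {y. x * y \<in> A} \<in> q} \<subseteq> {x. {y. x * y \<in> B} \<in> q}"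
      using h ufD(3)[OF q] by (smt (verit, best) mem_Collect_eq subset_iff)
    then show ?thesis using h ufD(3)[OF p] by blast
  qed
  assume h: "{x. {y. x * y \<in> A} \<in> q} \<in> p \<and> {x. {y. x * y \<in> B} \<in> q} \<in> p"
  have "{x. {y. x * y \<in> A \<inter> B} \<in> q} = {x. {y. x * y \<in> A} \<in> q} \<inter> {x. {y. x * y \<in> B} \<in> q}"
  proof -
    have e: "({y. x * y \<in> A \<inter> B} \<in> q) = ({y. x * y \<in> A} \<in> q \<and> {y. x * y \<in> B} \<in> q)" for x
    proof -
      have eq: "{y. x * y \<in> A \<inter> B} = {y. x * y \<in> A} \<inter> {y. x * y \<in> B}" by auto
      show ?thesis by (subst eq) (rule uf_Int[OF q])
    qed
    show ?thesis using e by blast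
  qed
  then show "{x. {y. x * y \<in> A \<inter> B} \<in> q} \<in> p" using h ufD(4)[OF p] by simp
next
  fix A
  have "{x. {y. x * y \<in> - A} \<in> q} = - {x. {y. x * y \<in> A} \<in> q}"
  proof (rule set_eqI)
    fix x
    have eq: "{y. x * y \<in> - A} = - {y. x * y \<in> A}" by auto
    have "({y. x * y \<in> - A} \<in> q) = ({y. x * y \<in> A} \<notin> q)"
      by (subst eq) (rule uf_compl[OF q])
    then show "x \<in> {x. {y. x * y \<in> - A} \<in> q} \<longleftrightarrow> x \<in> - {x. {y. x * y \<in> A} \<in> q}"
      by simp
  qed
  then show "{x. {y. x * y \<in> A} \<in> q} \<in> p \<or> {x. {y. x * y \<in> - A} \<in> q} \<in> p"
    using ufD(5)[OF p] by simp
qed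

lemma principal_iff:
  assumes "is_ultrafilter p" shows "is_principal p \<longleftrightarrow> (\<exists>a. {a} \<in> p)"
proof
  assume "is_principal p" then show "\<exists>a. {a} \<in> p"
    unfolding is_principal_def principal_uf_def by auto
next
  assume "\<exists>a. {a} \<in> p"
  then obtain a where a: "{a} \<in> p" by blast
  have "p = principal_uf a"
    unfolding principal_uf_def
  proof (intro set_eqI iffI)
    fix A assume "A \<in> p"
    then have "A \<inter> {a} \<in> p" using a ufD(4)[OF assms] by blast
    then have "A \<inter> {a} \<noteq> {}" using ufD(1)[OF assms] by metis
    then show "A \<in> {A. a \<in> A}" by blast
  next
    fix A assume "A \<in> {A. a \<in> A}"
    then show "A \<in> p" using a ufD(3)[OF assms] by blast
  qed
  then show "is_principal p" unfolding is_principal_def by blast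
qed



lemma minimal_member:
  fixes S :: "'a::semigroup_mult set set set"
  assumes S: "closedK S" "S \<noteq> {}" "sgK S"
  shows "\<exists>T. T \<subseteq> S \<and> T \<noteq> {} \<and> closedK T \<and> sgK T \<and>
     (\<forall>K. K \<subseteq> T \<and> K \<noteq> {} \<and> closedK K \<and> sgK K \<longrightarrow> K = T)"
proof -
  define fam where "fam = {K. K \<subseteq> S \<and> K \<noteq> {} \<and> closedK K \<and> sgK K}"
  have "\<exists>M\<in>uminus ` fam. \<forall>X\<in>uminus ` fam. M \<subseteq> X \<longrightarrow> X = M"
  proof (rule subset_Zorn)
    fix C assume ch: "subset.chain (uminus ` fam) C"
    have Csub: "C \<subseteq> uminus ` fam" and tot: "\<forall>X\<in>C. \<forall>Y\<in>C. X \<subseteq> Y \<or> Y \<subseteq> X"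
      using ch unfolding subset_chain_def by blast+
    define C' where "C' = uminus ` C"
    have C'fam: "K \<in> fam" if kC: "K \<in> C'" for K
    proof -
      obtain X where "X \<in> C" "K = - X" using kC C'_def by blast
      then obtain K0 where "K0 \<in> fam" "X = - K0" using Csub by blast
      then show ?thesis using \<open>K = - X\<close> by simp
    qed
    have tot': "K1 \<subseteq> K2 \<or> K2 \<subseteq> K1" if k12: "K1 \<in> C'" "K2 \<in> C'" for K1 K2
    proof -
      obtain X1 where "X1 \<in> C" "K1 = - X1" using k12 C'_def by blast
      obtain X2 where "X2 \<in> C" "K2 = - X2" using k12 C'_def by blast
      have "X1 \<subseteq> X2 \<or> X2 \<subseteq> X1" using tot \<open>X1 \<in> C\<close> \<open>X2 \<in> C\<close> by blast
      then show ?thesis using \<open>K1 = - X1\<close> \<open>K2 = - X2\<close> by auto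
    qed
    define KK where "KK = insert S C'"
    have KKfam: "K \<in> fam" if "K \<in> KK" for K
      using that C'fam S unfolding KK_def fam_def by auto
    have KKsub: "K \<subseteq> S" if "K \<in> KK" for K
      using KKfam[OF that] unfolding fam_def by blast
    define B where "B = \<Inter>KK"
    have BS: "B \<subseteq> S" unfolding B_def KK_def by blast
    have Bcl: "closedK B" unfolding B_def
      by (rule closedK_Inter) (use KKfam fam_def KK_def in auto)
    have Bsg: "sgK B" unfolding sgK_def B_def
    proof (intro ballI)
      fix p q assume "p \<in> \<Inter>KK" "q \<in> \<Inter>KK"
      have "uf_mult p q \<in> K" if "K \<in> KK" for K
      proof -
        have "sgK K" using KKfam[OF that] unfolding fam_def by blast
        moreover have "p \<in> K" "q \<in> K" using \<open>p \<in> \<Inter>KK\<close> \<open>q \<in> \<Inter>KK\<close> that by auto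
        ultimately show ?thesis unfolding sgK_def by blast
      qed
      then show "uf_mult p q \<in> \<Inter>KK" by blast
    qed
    have "\<exists>p. \<forall>K\<in>KK. p \<in> K"
    proof (rule compactK)
      show "KK \<noteq> {}" unfolding KK_def by blast
      show "closedK K" if "K \<in> KK" for K using KKfam[OF that] unfolding fam_def by blast
      show "K \<noteq> {}" if "K \<in> KK" for K using KKfam[OF that] unfolding fam_def by blast
      fix K1 K2 assume "K1 \<in> KK" "K2 \<in> KK"
      then have "K1 \<subseteq> K2 \<or> K2 \<subseteq> K1"
        using tot' KKsub unfolding KK_def by blast
      then have "K1 \<inter> K2 = K1 \<or> K1 \<inter> K2 = K2" by blast
      then show "\<exists>K3\<in>KK. K3 \<subseteq> K1 \<inter> K2" using \<open>K1 \<in> KK\<close> \<open>K2 \<in> KK\<close> by auto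
    qed
    then have "B \<noteq> {}" unfolding B_def by blast
    then have "B \<in> fam" unfolding fam_def using BS Bcl Bsg by blast
    moreover have "X \<subseteq> - B" if "X \<in> C" for X
    proof -
      have "- X \<in> KK" using that unfolding KK_def C'_def by blast
      then have "B \<subseteq> - X" unfolding B_def by blast
      then show ?thesis by blast
    qed
    ultimately show "\<exists>U\<in>uminus ` fam. \<forall>X\<in>C. X \<subseteq> U" by blast
  qed
  then obtain M where Mf: "M \<in> uminus ` fam" and mx: "\<forall>X\<in>uminus ` fam. M \<subseteq> X \<longrightarrow> X = M"
    by (rule bexE)
  obtain T where T: "T \<in> fam" "M = - T" using Mf by blast
  have "K = T" if "K \<subseteq> T" "K \<noteq> {}" "closedK K" "sgK K" for K
  proof -
    have "K \<in> fam" using that T unfolding fam_def by blast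
    then have "- K \<in> uminus ` fam" by blast
    moreover have "M \<subseteq> - K" using T that by blast
    ultimately have "- K = M" using mx by blast
    then show ?thesis using T by simp
  qed
  then show ?thesis using T unfolding fam_def by blast
qed

lemma idempotent_exists:
  fixes S :: "'a::semigroup_mult set set set"
  assumes S: "closedK S" "S \<noteq> {}" "sgK S"
  shows "\<exists>e\<in>S. uf_mult e e = e"
proof -
  from minimal_member[OF S] obtain T where T0: "T \<subseteq> S \<and> T \<noteq> {} \<and> closedK T \<and> sgK T \<and>
     (\<forall>K. K \<subseteq> T \<and> K \<noteq> {} \<and> closedK K \<and> sgK K \<longrightarrow> K = T)" by (rule exE)
  have T: "T \<subseteq> S" "T \<noteq> {}" "closedK T" "sgK T" using T0 by simp_all
  have mn: "K = T" if "K \<subseteq> T" "K \<noteq> {}" "closedK K" "sgK K" for K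
    using T0 that by simp
  obtain e where e: "e \<in> T" using T by blast
  have Tuf: "is_ultrafilter q" if "q \<in> T" for q using closedK_uf[OF T(3) that] .
  have Tmul: "uf_mult p q \<in> T" if "p \<in> T" "q \<in> T" for p q using T(4) that unfolding sgK_def by blast
  define Te where "Te = (\<lambda>q. uf_mult q e) ` T"
  have "Te \<subseteq> T" unfolding Te_def using Tmul e by blast
  moreover have "Te \<noteq> {}" unfolding Te_def using e by blast
  moreover have "sgK Te" unfolding sgK_def
  proof (intro ballI)
    fix a b assume "a \<in> Te" "b \<in> Te"
    have "\<exists>q\<in>T. a = uf_mult q e" using \<open>a \<in> Te\<close> unfolding Te_def image_iff .
    then obtain q where q1: "q \<in> T" "a = uf_mult q e" by (rule bexE)
    have "\<exists>q\<in>T. b = uf_mult q e" using \<open>b \<in> Te\<close> unfolding Te_def image_iff .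
    then obtain q' where q2: "q' \<in> T" "b = uf_mult q' e" by (rule bexE)
    note q = q1 q2
    have "uf_mult q (uf_mult e q') \<in> T" using q Tmul e by blast
    moreover have "uf_mult a b = uf_mult (uf_mult q (uf_mult e q')) e"
      using q by (simp add: uf_mult_assoc)
    ultimately show "uf_mult a b \<in> Te" unfolding Te_def by blast
  qed
  moreover have "closedK Te"
  proof (rule closedKI)
    fix p assume "p \<in> Te" then show "is_ultrafilter p"
      unfolding Te_def using uf_mult_uf Tuf e by blast
  next
    fix p assume p: "is_ultrafilter p" and h: "\<And>A. A \<in> p \<Longrightarrow> \<exists>q\<in>Te. A \<in> q"
    define BB where "BB A = {x. {y. x * y \<in> A} \<in> e}" for A
    have memBB: "A \<in> uf_mult q e \<longleftrightarrow> BB A \<in> q" for A q unfolding BB_def uf_mult_mem ..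
    have BBInt: "BB (A1 \<inter> A2) = BB A1 \<inter> BB A2" for A1 A2
    proof -
      have "({y. x * y \<in> A1 \<inter> A2} \<in> e) = ({y. x * y \<in> A1} \<in> e \<and> {y. x * y \<in> A2} \<in> e)" for x
      proof -
        have eq: "{y. x * y \<in> A1 \<inter> A2} = {y. x * y \<in> A1} \<inter> {y. x * y \<in> A2}" by auto
        show ?thesis by (subst eq) (rule uf_Int[OF Tuf[OF e]])
      qed
      then show ?thesis unfolding BB_def by blast
    qed
    define KK where "KK = (\<lambda>A. T \<inter> {q. is_ultrafilter q \<and> (\<forall>C\<in>{BB A}. C \<in> q)}) ` p"
    have "\<exists>q. \<forall>K\<in>KK. q \<in> K"
    proof (rule compactK)
      show "KK \<noteq> {}" unfolding KK_def using ufD(2)[OF p] by blast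
      show "closedK K" if "K \<in> KK" for K
        using that unfolding KK_def using closedK_Int[OF T(3) closedK_basic] by blast
      show "K \<noteq> {}" if kK: "K \<in> KK" for K
      proof -
        obtain A where A: "A \<in> p" "K = T \<inter> {q. is_ultrafilter q \<and> (\<forall>C\<in>{BB A}. C \<in> q)}"
          using kK unfolding KK_def by blast
        obtain a where "a \<in> Te" "A \<in> a" using h[OF A(1)] by blast
        then obtain q where "q \<in> T" "A \<in> uf_mult q e" unfolding Te_def by blast
        then have "q \<in> K" using A memBB Tuf by auto
        then show ?thesis by blast
      qed
      fix K1 K2 assume "K1 \<in> KK" "K2 \<in> KK"
      then obtain A1 A2 where A: "A1 \<in> p" "K1 = T \<inter> {q. is_ultrafilter q \<and> (\<forall>C\<in>{BB A1}. C \<in> q)}"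
        "A2 \<in> p" "K2 = T \<inter> {q. is_ultrafilter q \<and> (\<forall>C\<in>{BB A2}. C \<in> q)}"
        unfolding KK_def by blast
      have "A1 \<inter> A2 \<in> p" using A ufD(4)[OF p] by blast
      moreover have "T \<inter> {q. is_ultrafilter q \<and> (\<forall>C\<in>{BB (A1 \<inter> A2)}. C \<in> q)} \<subseteq> K1 \<inter> K2"
        using A by (auto simp: BBInt uf_Int)
      ultimately show "\<exists>K3\<in>KK. K3 \<subseteq> K1 \<inter> K2" unfolding KK_def by blast
    qed
    then obtain q where q: "\<And>K. K \<in> KK \<Longrightarrow> q \<in> K" by blast
    have qT: "q \<in> T"
      using q[of "T \<inter> {q. is_ultrafilter q \<and> (\<forall>C\<in>{BB UNIV}. C \<in> q)}"] ufD(2)[OF p]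
      unfolding KK_def by blast
    have "p \<subseteq> uf_mult q e"
    proof
      fix A assume "A \<in> p"
      then have "q \<in> T \<inter> {q. is_ultrafilter q \<and> (\<forall>C\<in>{BB A}. C \<in> q)}"
        using q unfolding KK_def by blast
      then show "A \<in> uf_mult q e" using memBB by blast
    qed
    then have "p = uf_mult q e" using uf_eq p uf_mult_uf Tuf qT e by blast
    then show "p \<in> Te" unfolding Te_def using qT by blast
  qed
  ultimately have "Te = T" using mn by blast
  then have "e \<in> Te" using e by simp
  then have "\<exists>q\<in>T. e = uf_mult q e" unfolding Te_def image_iff .
  then obtain q0 where q0: "q0 \<in> T" "uf_mult q0 e = e" by (metis)
  define V where "V = {q \<in> T. uf_mult q e = e}"
  have "V \<subseteq> T" unfolding V_def by blast
  moreover have "V \<noteq> {}" unfolding V_def using q0 by blast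
  moreover have "sgK V" unfolding sgK_def V_def
  proof (intro ballI)
    fix a b assume a: "a \<in> {q \<in> T. uf_mult q e = e}" and b: "b \<in> {q \<in> T. uf_mult q e = e}"
    then have "uf_mult (uf_mult a b) e = e" by (simp add: uf_mult_assoc)
    moreover have "uf_mult a b \<in> T" using a b Tmul by blast
    ultimately show "uf_mult a b \<in> {q \<in> T. uf_mult q e = e}" by blast
  qed
  moreover have "closedK V"
  proof (rule closedKI)
    fix p assume "p \<in> V" then show "is_ultrafilter p" unfolding V_def using Tuf by blast
  next
    fix p assume p: "is_ultrafilter p" and h: "\<And>A. A \<in> p \<Longrightarrow> \<exists>q\<in>V. A \<in> q"
    have pT: "p \<in> T"
    proof (rule closedK_cl[OF T(3) p])
      fix A assume "A \<in> p" then show "\<exists>q\<in>T. A \<in> q" using h \<open>V \<subseteq> T\<close> by blast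
    qed
    have "e \<subseteq> uf_mult p e"
    proof
      fix A assume A: "A \<in> e"
      show "A \<in> uf_mult p e" unfolding uf_mult_mem
      proof (rule ccontr)
        assume "{x. {y. x * y \<in> A} \<in> e} \<notin> p"
        then have "- {x. {y. x * y \<in> A} \<in> e} \<in> p" using uf_compl[OF p] by blast
        then obtain q where qV: "q \<in> V" "- {x. {y. x * y \<in> A} \<in> e} \<in> q" using h by blast
        then have "A \<in> uf_mult q e" using A unfolding V_def by simp
        then have "{x. {y. x * y \<in> A} \<in> e} \<in> q" unfolding uf_mult_mem .
        moreover have "is_ultrafilter q" using qV Tuf unfolding V_def by blast
        ultimately show False using qV(2) uf_compl by blast
      qed
    qed
    then have "e = uf_mult p e" using uf_eq Tuf[OF e] uf_mult_uf[OF p Tuf[OF e]] by blast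
    then show "p \<in> V" unfolding V_def using pT by simp
  qed
  ultimately have "V = T" using mn by blast
  then have "uf_mult e e = e" using e unfolding V_def by blast
  then show ?thesis using e T(1) by blast
qed



lemma ordprod_Cons: "ks \<noteq> [] \<Longrightarrow> ordprod x (i # ks) = x i * ordprod x ks"
  by (cases ks) auto

lemma ordprod_append:
  "ks \<noteq> [] \<Longrightarrow> js \<noteq> [] \<Longrightarrow> ordprod x (ks @ js) = ordprod x ks * ordprod x js"
proof (induction ks)
  case Nil then show ?case by simp
next
  case (Cons i ks)
  show ?case
  proof (cases "ks = []")
    case True then show ?thesis using Cons.prems ordprod_Cons by simp
  next
    case False
    then have "ordprod x ((i # ks) @ js) = x i * (ordprod x ks * ordprod x js)"
      using Cons ordprod_Cons[of "ks @ js" x i] by simp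
    also have "\<dots> = ordprod x (i # ks) * ordprod x js"
      by (subst ordprod_Cons[OF False]) (simp add: mult.assoc)
    finally show ?thesis .
  qed
qed

definition star :: "'a::semigroup_mult set set \<Rightarrow> 'a set \<Rightarrow> 'a set" where
  "star p B = {x \<in> B. {y. x * y \<in> B} \<in> p}"

primrec AA :: "'a::semigroup_mult set set \<Rightarrow> 'a set \<Rightarrow> nat \<Rightarrow> 'a set" where
  "AA p A 0 = star p A"
| "AA p A (Suc n) = (let x = SOME x. x \<in> AA p A n in star p (AA p A n \<inter> {y. x * y \<in> AA p A n} \<inter> - {x}))"

definition xs :: "'a::semigroup_mult set set \<Rightarrow> 'a set \<Rightarrow> nat \<Rightarrow> 'a" where
  "xs p A n = (SOME x. x \<in> AA p A n)"

lemma galvin_glazer: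
  fixes p :: "'a::semigroup_mult set set"
  assumes p: "is_ultrafilter p" and idem: "uf_mult p p = p" and np: "\<And>a. - {a} \<in> p"
    and A: "A \<in> p"
  shows "DIP A"
proof -
  have star_sub: "star p B \<subseteq> B" for B unfolding star_def by blast
  have star_in: "star p B \<in> p" if "B \<in> p" for B
  proof -
    have "B \<in> uf_mult p p" using that idem by simp
    then have "{x. {y. x * y \<in> B} \<in> p} \<in> p" unfolding uf_mult_mem .
    then have "B \<inter> {x. {y. x * y \<in> B} \<in> p} \<in> p" using ufD(4)[OF p] that by blast
    moreover have "B \<inter> {x. {y. x * y \<in> B} \<in> p} = star p B" unfolding star_def by blast
    ultimately show ?thesis by simp
  qed
  have star_good: "{y. x * y \<in> star p B} \<in> p" if "B \<in> p" "x \<in> star p B" for B x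
  proof -
    have "{y. x * y \<in> B} \<in> p" using that(2) unfolding star_def by blast
    then have "star p {y. x * y \<in> B} \<in> p" by (rule star_in)
    moreover have "star p {y. x * y \<in> B} \<subseteq> {y. x * y \<in> star p B}"
      unfolding star_def by (auto simp: mult.assoc)
    ultimately show ?thesis using ufD(3)[OF p] by blast
  qed
  define a where "a = AA p A"
  define s where "s = xs p A"
  have aSuc: "a (Suc n) = star p (a n \<inter> {y. s n * y \<in> a n} \<inter> - {s n})" for n
    unfolding a_def s_def xs_def by (simp add: Let_def)
  have inv: "a n \<in> p \<and> (\<forall>x\<in>a n. {y. x * y \<in> a n} \<in> p)" for n
  proof (induction n)
    case 0
    have "star p A \<in> p" using star_in[OF A] .
    moreover have "\<forall>x\<in>star p A. {y. x * y \<in> star p A} \<in> p" using star_good[OF A] by blast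
    ultimately show ?case unfolding a_def by simp
  next
    case (Suc n)
    have "a n \<noteq> {}" using Suc ufD(1)[OF p] by metis
    then have sn: "s n \<in> a n" unfolding s_def xs_def a_def by (metis some_in_eq)
    have B: "a n \<inter> {y. s n * y \<in> a n} \<inter> - {s n} \<in> p"
      using Suc sn ufD(4)[OF p] np by blast
    show ?case unfolding aSuc using star_in[OF B] star_good[OF B] by blast
  qed
  have sin: "s n \<in> a n" for n
  proof -
    have "a n \<noteq> {}" using inv[of n] ufD(1)[OF p] by metis
    then show ?thesis unfolding s_def xs_def a_def by (metis some_in_eq)
  qed
  have dec1: "a (Suc n) \<subseteq> a n" for n unfolding aSuc using star_sub by blast
  have dec2: "a (Suc n) \<subseteq> {y. s n * y \<in> a n}" for n unfolding aSuc using star_sub by blast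
  have dec3: "s n \<notin> a (Suc n)" for n unfolding aSuc using star_sub by blast
  have mono: "a n \<subseteq> a m" if "m \<le> n" for m n
    using lift_Suc_antimono_le[of a, OF dec1 that] .
  have "inj s"
  proof (rule injI)
    fix m n assume eq: "s m = s n"
    show "m = n"
    proof (rule ccontr)
      assume "m \<noteq> n"
      then consider "m < n" | "n < m" by linarith
      then show False
      proof cases
        case 1
        then have "s n \<in> a (Suc m)" using mono[of "Suc m" n] sin[of n] by auto
        then show False using dec3[of m] eq by simp
      next
        case 2
        then have "s m \<in> a (Suc n)" using mono[of "Suc n" m] sin[of m] by auto
        then show False using dec3[of n] eq by simp
      qed
    qed
  qed
  have fp: "ordprod s ks \<in> a n" if "ks \<noteq> []" "sorted_wrt (<) ks" "\<forall>i\<in>set ks. n \<le> i" for ks n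
    using that
  proof (induction ks arbitrary: n)
    case Nil then show ?case by simp
  next
    case (Cons i ks)
    have "n \<le> i" using Cons.prems by simp
    show ?case
    proof (cases "ks = []")
      case True
      then show ?thesis using sin[of i] mono[OF \<open>n \<le> i\<close>] by auto
    next
      case False
      have "sorted_wrt (<) ks" "\<forall>j\<in>set ks. Suc i \<le> j" using Cons.prems by auto
      then have "ordprod s ks \<in> a (Suc i)" using Cons.IH False by blast
      then have "s i * ordprod s ks \<in> a i" using dec2[of i] by blast
      then have "ordprod s (i # ks) \<in> a i" by (subst ordprod_Cons[OF False])
      then show ?thesis using mono[OF \<open>n \<le> i\<close>] by blast
    qed
  qed
  have "FP s \<subseteq> A"
  proof
    fix y assume "y \<in> FP s"
    then obtain ks where "ks \<noteq> []" "sorted_wrt (<) ks" "y = ordprod s ks" unfolding FP_def by blast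
    then have "y \<in> a 0" using fp[of ks 0] by simp
    then show "y \<in> A" unfolding a_def using star_sub by auto
  qed
  then show ?thesis unfolding DIP_def using \<open>inj s\<close> by blast
qed



definition FPt :: "(nat \<Rightarrow> 'a::semigroup_mult) \<Rightarrow> nat \<Rightarrow> 'a set" where
  "FPt x m = {ordprod x ks | ks. ks \<noteq> [] \<and> sorted_wrt (<) ks \<and> (\<forall>i\<in>set ks. m \<le> i)}"

lemma FPt_iff: "a \<in> FPt x m \<longleftrightarrow> (\<exists>ks. a = ordprod x ks \<and> ks \<noteq> [] \<and> sorted_wrt (<) ks \<and> (\<forall>i\<in>set ks. m \<le> i))"
  unfolding FPt_def by (rule mem_Collect_eq)

lemma FPt_mono: "m \<le> m' \<Longrightarrow> FPt x m' \<subseteq> FPt x m"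
proof
  fix a assume "m \<le> m'" "a \<in> FPt x m'"
  then obtain ks where "a = ordprod x ks" "ks \<noteq> []" "sorted_wrt (<) ks" "\<forall>i\<in>set ks. m' \<le> i"
    unfolding FPt_iff by blast
  moreover have "\<forall>i\<in>set ks. m \<le> i" using calculation(4) \<open>m \<le> m'\<close> le_trans by blast
  ultimately show "a \<in> FPt x m" unfolding FPt_iff by blast
qed

lemma x_in_FPt: "m \<le> i \<Longrightarrow> x i \<in> FPt x m"
  unfolding FPt_iff by (rule exI[of _ "[i]"]) simp

lemma FP_eq: "FP x = FPt x 0"
  unfolding FP_def FPt_def by simp

lemma FPt_mult:
  assumes "a \<in> FPt x m"
  shows "\<exists>k. \<forall>b\<in>FPt x k. a * b \<in> FPt x m"
proof -
  from assms obtain ks where ks0: "a = ordprod x ks \<and> ks \<noteq> [] \<and> sorted_wrt (<) ks \<and> (\<forall>i\<in>set ks. m \<le> i)"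
    unfolding FPt_iff by (rule exE)
  have ks: "ks \<noteq> []" "sorted_wrt (<) ks" "\<forall>i\<in>set ks. m \<le> i" "a = ordprod x ks"
    using ks0 by simp_all
  have "a * b \<in> FPt x m" if "b \<in> FPt x (Suc (Max (set ks)))" for b
  proof -
    from that obtain js where js0: "b = ordprod x js \<and> js \<noteq> [] \<and> sorted_wrt (<) js \<and> (\<forall>i\<in>set js. Suc (Max (set ks)) \<le> i)"
      unfolding FPt_iff by (rule exE)
    have js: "js \<noteq> []" "sorted_wrt (<) js" "\<forall>i\<in>set js. Suc (Max (set ks)) \<le> i" "b = ordprod x js"
      using js0 by simp_all
    have lt: "\<forall>i\<in>set ks. \<forall>j\<in>set js. i < j"
    proof (intro ballI)
      fix i j assume "i \<in> set ks" "j \<in> set js"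
      then have "i \<le> Max (set ks)" by simp
      moreover have "Suc (Max (set ks)) \<le> j" using js(3) \<open>j \<in> set js\<close> by blast
      ultimately show "i < j" by linarith
    qed
    have srt: "sorted_wrt (<) (ks @ js)" using ks(2) js(2) lt by (simp add: sorted_wrt_append)
    have "hd ks \<in> set ks" using ks(1) by simp
    then have "m \<le> hd ks" "hd ks \<le> Max (set ks)" using ks(3) by auto
    then have mM: "m \<le> Max (set ks)" by linarith
    have "\<forall>i\<in>set js. m \<le> i"
    proof
      fix i assume "i \<in> set js" then have "Suc (Max (set ks)) \<le> i" using js(3) by blast
      then show "m \<le> i" using mM by linarith
    qed
    then have "\<forall>i\<in>set (ks @ js). m \<le> i" using ks(3) by (simp add: ball_Un)
    moreover have "a * b = ordprod x (ks @ js)" unfolding ks(4) js(4) by (rule ordprod_append[OF ks(1) js(1), symmetric])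
    moreover have "ks @ js \<noteq> []" using ks by simp
    ultimately show ?thesis unfolding FPt_iff using srt by (intro exI[of _ "ks @ js"]) simp
  qed
  then show ?thesis by (intro exI[of _ "Suc (Max (set ks))"]) simp
qed

lemma FPt_infinite:
  assumes "inj x" shows "infinite (FPt x m)"
proof
  assume "finite (FPt x m)"
  moreover have "x ` {m..} \<subseteq> FPt x m" using x_in_FPt by (auto simp del: atLeast_iff simp: atLeast_iff)
  ultimately have "finite (x ` {m..})" by (rule finite_subset[rotated])
  moreover have "inj_on x {m..}" by (rule inj_on_subset[OF assms]) simp
  ultimately have "finite {m..}" by (rule finite_imageD)
  then show False using infinite_Ici by blast
qed


theorem mainTheorem3:
  fixes X Y :: "'a::semigroup_mult set"
  assumes "moving TYPE('a)"
    and "DIP X"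
    and "Y \<subseteq> X"
  shows "DIP Y \<or> DIP (X - Y)"
proof -
  obtain x :: "nat \<Rightarrow> 'a" where x: "inj x" "FP x \<subseteq> X" using assms(2) unfolding DIP_def by blast
  define CC where "CC = range (\<lambda>a::'a. - {a}) \<union> range (FPt x)"
  define S where "S = {p. is_ultrafilter p \<and> (\<forall>C\<in>CC. C \<in> p)}"
  have Sm: "p \<in> S \<longleftrightarrow> is_ultrafilter p \<and> (\<forall>a. - {a} \<in> p) \<and> (\<forall>m. FPt x m \<in> p)" for p
    unfolding S_def CC_def by blast
  have Scl: "closedK S" unfolding S_def by (rule closedK_basic)
  have Sne: "S \<noteq> {}"
  proof -
    define F where "F = {C. \<exists>m F0. finite F0 \<and> FPt x m - F0 \<subseteq> C}"
    have "pfilter F" unfolding pfilter_def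
    proof (intro conjI allI impI)
      show "{} \<notin> F"
      proof
        assume "{} \<in> F"
        then obtain m F0 where "finite F0" "FPt x m - F0 \<subseteq> {}" unfolding F_def by blast
        moreover have "infinite (FPt x m - F0)"
          using Diff_infinite_finite[OF \<open>finite F0\<close> FPt_infinite[OF x(1)]] .
        ultimately show False by (metis finite.emptyI subset_empty)
      qed
      show "UNIV \<in> F" unfolding F_def by blast
      show "A \<in> F \<and> A \<subseteq> B \<Longrightarrow> B \<in> F" for A B unfolding F_def by blast
      fix A B assume "A \<in> F \<and> B \<in> F"
      then obtain m1 F1 m2 F2 where h: "finite F1" "FPt x m1 - F1 \<subseteq> A" "finite F2" "FPt x m2 - F2 \<subseteq> B"
        unfolding F_def by blast
      have "FPt x (max m1 m2) \<subseteq> FPt x m1" "FPt x (max m1 m2) \<subseteq> FPt x m2"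
        by (auto intro!: FPt_mono)
      then have "FPt x (max m1 m2) - (F1 \<union> F2) \<subseteq> A \<inter> B" using h by blast
      moreover have "finite (F1 \<union> F2)" using h by simp
      ultimately show "A \<inter> B \<in> F" unfolding F_def by blast
    qed
    then obtain p where p: "is_ultrafilter p" "F \<subseteq> p" using uf_exists by blast
    have "- {a} \<in> F" for a
    proof -
      have "FPt x 0 - {a} \<subseteq> - {a}" by blast
      then show ?thesis unfolding F_def by blast
    qed
    moreover have "FPt x m \<in> F" for m
    proof -
      have "FPt x m - {} \<subseteq> FPt x m" by blast
      then show ?thesis unfolding F_def by blast
    qed
    ultimately have "p \<in> S" using p Sm by blast
    then show ?thesis by blast
  qed
  have nonprin: "\<not> is_principal p" if "p \<in> S" for p
  proof
    assume "is_principal p"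
    moreover have "is_ultrafilter p" using that Sm by blast
    ultimately obtain a where "{a} \<in> p" using principal_iff by blast
    moreover have "- {a} \<in> p" using that Sm by blast
    ultimately show False using uf_compl \<open>is_ultrafilter p\<close> by blast
  qed
  have Ssg: "sgK S" unfolding sgK_def
  proof (intro ballI)
    fix p q assume pS: "p \<in> S" and qS: "q \<in> S"
    have puf: "is_ultrafilter p" and quf: "is_ultrafilter q" using pS qS Sm by blast+
    have uf: "is_ultrafilter (uf_mult p q)" using uf_mult_uf[OF puf quf] .
    have "\<not> is_principal (uf_mult p q)"
      using assms(1) nonprin[OF pS] nonprin[OF qS] puf quf unfolding moving_def by blast
    then have "- {a} \<in> uf_mult p q" for a using principal_iff[OF uf] uf_compl[OF uf] by blast
    moreover have "FPt x m \<in> uf_mult p q" for m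
      unfolding uf_mult_mem
    proof -
      have "FPt x m \<subseteq> {a. {b. a * b \<in> FPt x m} \<in> q}"
      proof
        fix a assume "a \<in> FPt x m"
        then obtain k where k: "\<forall>b\<in>FPt x k. a * b \<in> FPt x m" using FPt_mult by blast
        have "FPt x k \<in> q" using qS Sm by blast
        moreover have "FPt x k \<subseteq> {b. a * b \<in> FPt x m}" using k by blast
        ultimately show "a \<in> {a. {b. a * b \<in> FPt x m} \<in> q}" using ufD(3)[OF quf] by blast
      qed
      moreover have "FPt x m \<in> p" using pS Sm by blast
      ultimately show "{a. {b. a * b \<in> FPt x m} \<in> q} \<in> p" using ufD(3)[OF puf] by blast
    qed
    ultimately show "uf_mult p q \<in> S" using Sm uf by blast
  qed
  obtain e where eS: "e \<in> S" and idem: "uf_mult e e = e"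
    using idempotent_exists[OF Scl Sne Ssg] by blast
  have euf: "is_ultrafilter e" and np: "\<And>a. - {a} \<in> e" and "FPt x 0 \<in> e" using eS Sm by blast+
  then have Xe: "X \<in> e" using x(2) FP_eq ufD(3)[OF euf] by metis
  show ?thesis
  proof (cases "Y \<in> e")
    case True
    then show ?thesis using galvin_glazer[OF euf idem np] by blast
  next
    case False
    then have "- Y \<in> e" using uf_compl[OF euf] by blast
    then have "X \<inter> - Y \<in> e" using Xe ufD(4)[OF euf] by blast
    then have "X - Y \<in> e" by (simp add: Diff_eq)
    then show ?thesis using galvin_glazer[OF euf idem np] by blast
  qed
qed


end
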